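(* Let $m\ge1$ and let $a_0,\dots,a_m,b_1,\dots,b_m\in\mathbb C$ satisfy $a_i-b_j\notin\mathbb Z$ ($0\le i,j\le m$) and $b_i-b_j\notin\mathbb Z$ ($0\le i<j\le m$), where $b_0:=0$; write $a_{m+1}:=a_0$. Then, for $x$ in a neighbourhood of $0$ (as an identity of power series), $$\prod_{l=1}^m\frac{b_l}{a_l}=\prod_{l=1}^m\frac{b_l}{a_l}\cdot{}_{m+1}F_m\!\left(\begin{matrix}\boldsymbol a\\ \boldsymbol b\end{matrix};x\right){}_{m+1}F_m\!\left(\begin{matrix}-\boldsymbol a\\ -\boldsymbol b\end{matrix};x\right)+\sum_{r=1}^m x^2\frac{a_0(a_0-b_r)(b_r-a_r)}{b_r(b_r^2-1)}\prod_{\substack{1\le l\le m\\ l\ne r}}\frac{a_l-b_r}{b_l-b_r}\cdot{}_{m+1}F_m\!\left(\begin{matrix}\boldsymbol a^{r,+}\\ \boldsymbol b^{r,+}\end{matrix};x\right){}_{m+1}F_m\!\left(\begin{matrix}\boldsymbol a^{r,-}\\ \boldsymbol b^{r,-}\end{matrix};x\right),$$ where $\boldsymbol a=(a_1,\dots,a_{m+1})$, $\boldsymbol b=(b_1,\dots,b_m)$, $\boldsymbol a^{r,\pm}=(1,\dots,1)\pm(a_1-b_r,\dots,a_{m+1}-b_r)$, and $\boldsymbol b^{r,\pm}=(1,\dots,1)\pm(b_1-b_r,\dots,\pm1-b_r,\dots,b_m-b_r)$, the entry $\pm1-b_r$ being in the $r$-th position (so the $r$-th entry of $\boldsymbol b^{r,+}$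 is $2-b_r$ and that of $\boldsymbol b^{r,-}$ is $2+b_r$).
   Context: ${}_{m+1}F_m\!\left(\begin{matrix}\alpha_1,\dots,\alpha_{m+1}\\ \beta_1,\dots,\beta_m\end{matrix};x\right)=\sum_{n=0}^\infty\frac{(\alpha_1,n)\cdots(\alpha_{m+1},n)}{(\beta_1,n)\cdots(\beta_m,n)\,n!}x^n$ with $(c,n)=\Gamma(c+n)/\Gamma(c)$, convergent for $|x|<1$; $-\boldsymbol a$, $-\boldsymbol b$ denote the componentwise negated parameter vectors. *)

theory Defs
  imports Complex_Main "HOL-Computational_Algebra.Formal_Power_Series"
begin

definition hyp_fps :: "complex list \<Rightarrow> complex list \<Rightarrow> complex fps" where
  "hyp_fps as bs = Abs_fps (\<lambda>n.
     prod_list (map (\<lambda>\<alpha>. pochhammer \<alpha> n) as) /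
     (prod_list (map (\<lambda>\<beta>. pochhammer \<beta> n) bs) * fact n))"

end

theory Submission
  imports Defs "HOL-Computational_Algebra.Polynomial"
begin



lemma lagrange_zero:
  fixes Z :: "complex set" and p :: "complex poly"
  assumes fin: "finite Z" and deg: "degree p + 2 \<le> card Z"
  shows "(\<Sum>z\<in>Z. poly p z / (\<Prod>w\<in>Z-{z}. z - w)) = 0"
proof -
  define L where "L z = (\<Prod>w\<in>Z-{z}. [:-w,1:])" for z
  define c where "c z = poly p z / (\<Prod>w\<in>Z-{z}. z - w)" for z
  define q where "q = (\<Sum>z\<in>Z. smult (c z) (L z))"
  have degL: "degree (L z) = card Z - 1" if "z \<in> Z" for z
  proof -
    have "degree (L z) = (\<Sum>w\<in>Z-{z}. degree [:-w,1::complex:])"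
      unfolding L_def by (rule degree_prod_sum_eq) auto
    also have "\<dots> = card (Z - {z})" by simp
    finally show ?thesis using that fin by simp
  qed
  have lcL: "lead_coeff (L z) = 1" for z
    unfolding L_def lead_coeff_prod by simp
  have polyL: "poly (L z) y = (\<Prod>w\<in>Z-{z}. y - w)" for z y
    unfolding L_def poly_prod by simp
  have degq: "degree q \<le> card Z - 1"
    unfolding q_def
    by (rule degree_sum_le[OF fin]) (metis degL degree_smult_le order.trans order.refl)
  have nz: "(\<Prod>w\<in>Z-{z}. z - w) \<noteq> 0" for z
    using fin by (subst prod_zero_iff) auto
  have pq: "poly q y = poly p y" if "y \<in> Z" for y
  proof -
    have "poly q y = (\<Sum>z\<in>Z. c z * poly (L z) y)"
      unfolding q_def poly_sum by simp
    also have "\<dots> = c y * poly (L y) y"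
    proof (rule sum.remove[OF fin that, THEN trans])
      have "(\<Sum>z\<in>Z - {y}. c z * poly (L z) y) = 0"
        by (rule sum.neutral) (use fin that in \<open>auto simp: polyL\<close>)
      then show "c y * poly (L y) y + (\<Sum>z\<in>Z - {y}. c z * poly (L z) y) = c y * poly (L y) y"
        by simp
    qed
    also have "\<dots> = poly p y" using nz[of y] by (simp add: c_def polyL)
    finally show ?thesis .
  qed
  have "p = q"
    by (rule poly_eqI_degree[of Z]) (use pq degq deg in auto)
  hence "coeff q (card Z - 1) = 0" using deg by (simp add: coeff_eq_0)
  moreover have "coeff q (card Z - 1) = (\<Sum>z\<in>Z. c z)"
    unfolding q_def coeff_sum coeff_smult
  proof (rule sum.cong)
    fix x assume "x \<in> Z"
    then have "coeff (L x) (card Z - 1) = 1" using degL[of x] lcL[of x] by simp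
    then show "c x * coeff (L x) (card Z - 1) = c x" by simp
  qed simp
  ultimately show ?thesis unfolding c_def by simp
qed




definition Q :: "complex \<Rightarrow> int \<Rightarrow> int \<Rightarrow> complex" where
  "Q u lo hi = (\<Prod>t\<in>{lo..hi}. u + of_int t)"

lemma Q_empty: "hi < lo \<Longrightarrow> Q u lo hi = 1"
  by (simp add: Q_def)

lemma Q_single: "Q u c c = u + of_int c"
  by (simp add: Q_def)

lemma Q_split:
  assumes "lo \<le> mid + 1" "mid \<le> hi"
  shows "Q u lo hi = Q u lo mid * Q u (mid+1) hi"
proof -
  have "{lo..hi} = {lo..mid} \<union> {mid+1..hi}" using assms by auto
  then show ?thesis unfolding Q_def
    by (subst prod.union_disjoint[symmetric]; auto)
qed

lemma Q_shift: "Q (u + of_int c) lo hi = Q u (lo + c) (hi + c)"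
proof -
  have "Q u (lo + c) (hi + c) = (\<Prod>t\<in>(\<lambda>t. t + c) ` {lo..hi}. u + of_int t)"
    unfolding Q_def by (simp add: image_add_atLeastAtMost')
  also have "\<dots> = (\<Prod>t\<in>{lo..hi}. u + of_int (t + c))"
    by (subst prod.reindex) (auto simp: inj_on_def)
  also have "\<dots> = Q (u + of_int c) lo hi" unfolding Q_def by (simp add: algebra_simps)
  finally show ?thesis by simp
qed

lemma Q_refl: "Q u lo hi = (-1)^(nat(hi-lo+1)) * Q (-u) (-hi) (-lo)"
proof -
  have "Q (-u) (-hi) (-lo) = (\<Prod>t\<in>uminus ` {lo..hi}. - u + of_int t)"
    unfolding Q_def by simp
  also have "\<dots> = (\<Prod>t\<in>{lo..hi}. - (u + of_int t))"
    by (subst prod.reindex) (auto simp: inj_on_def intro!: prod.cong)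
  also have "\<dots> = (-1)^(card {lo..hi}) * Q u lo hi"
    unfolding Q_def by (subst prod_uminus) simp
  finally show ?thesis by simp
qed

lemma poch_Q: "pochhammer u k = Q u 0 (int k - 1)"
proof -
  have "pochhammer u k = (\<Prod>t\<in>{0..<k}. u + of_nat t)" by (rule pochhammer_prod)
  also have "\<dots> = (\<Prod>t\<in>int ` {0..<k}. u + of_int t)"
    by (subst prod.reindex) auto
  also have "int ` {0..<k} = {0..int k - 1}" by (auto simp: image_int_atLeastLessThan)
  finally show ?thesis unfolding Q_def .
qed

lemma prod_minus_Q: "(\<Prod>t\<in>{lo..hi}. x - of_int t) = Q x (-hi) (-lo)"
proof -
  have "Q x (-hi) (-lo) = (\<Prod>t\<in>uminus ` {lo..hi}. x + of_int t)"
    unfolding Q_def by simp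
  also have "\<dots> = (\<Prod>t\<in>{lo..hi}. x - of_int t)"
    by (subst prod.reindex) (auto simp: inj_on_def)
  finally show ?thesis by simp
qed

lemma Q_nz: "u \<notin> \<int> \<Longrightarrow> Q u lo hi \<noteq> 0"
  unfolding Q_def
proof (subst prod_zero_iff; clarsimp)
  fix t assume "u \<notin> \<int>" "u + of_int t = 0"
  then have "u = of_int (-t)" by (simp add: add_eq_0_iff)
  with \<open>u \<notin> \<int>\<close> show False by auto
qed

lemma poch_neg: "pochhammer (1 - u) j = (-1)^j * Q u (- int j) (-1)"
proof -
  have "pochhammer (1 - u) j = Q (1 - u) 0 (int j - 1)" by (rule poch_Q)
  also have "\<dots> = (-1)^j * Q (u - 1) (1 - int j) 0"
    by (subst Q_refl) simp
  also have "Q (u - 1) (1 - int j) 0 = Q (u + of_int (-1)) (1 - int j) 0" by simp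
  also have "\<dots> = Q u (- int j) (-1)" by (subst Q_shift) simp
  finally show ?thesis .
qed

lemma Q_mid: "lo \<le> 0 \<Longrightarrow> 0 \<le> hi \<Longrightarrow> Q u lo hi = Q u lo (-1) * u * Q u 1 hi"
  using Q_split[of lo "-1" hi u] Q_split[of 0 0 hi u] by (simp add: Q_single)

lemma Q_overlap:
  assumes "lo \<le> 1" "-1 \<le> hi" "lo \<le> hi + 1"
  shows "Q u lo 0 * Q u 0 hi = u * Q u lo hi"
proof (cases "lo = 1")
  case True
  then have "hi \<ge> 0" using assms by simp
  then show ?thesis using True Q_split[of 0 0 hi u] by (simp add: Q_empty Q_single)
next
  case False
  then have lo: "lo \<le> 0" using assms by simp
  have a: "Q u lo 0 = Q u lo (-1) * u" using Q_split[of lo "-1" 0 u] lo by (simp add: Q_single)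
  have b: "Q u lo hi = Q u lo (-1) * Q u 0 hi" using Q_split[of lo "-1" hi u] lo assms by simp
  show ?thesis using a b by simp
qed

lemma fact_Q: "fact k = Q 0 1 (int k)"
proof -
  have "fact k = Q (0 + of_int 1) 0 (int k - 1)" by (simp add: pochhammer_fact poch_Q)
  also have "\<dots> = Q 0 1 (int k)" by (subst Q_shift) simp
  finally show ?thesis .
qed




lemma K1:
  assumes "k \<le> n" "1 \<le> n"
  shows "pochhammer x k * pochhammer (-x) (n-k) = (-1)^(n-k) * x * Q (x + of_nat k) (1 - int n) (-1)"
proof -
  have "pochhammer (-x) (n-k) = pochhammer (1 - (x+1)) (n-k)" by simp
  also have "\<dots> = (-1)^(n-k) * Q (x + of_int 1) (- int (n-k)) (-1)" using poch_neg[of "x+1" "n-k"] by simp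
  also have "Q (x + of_int 1) (- int (n-k)) (-1) = Q x (int k + 1 - int n) 0"
    using assms by (subst Q_shift) (simp add: of_nat_diff algebra_simps)
  finally have a: "pochhammer (-x) (n-k) = (-1)^(n-k) * Q x (int k + 1 - int n) 0" .
  have b: "Q x (int k + 1 - int n) 0 * Q x 0 (int k - 1) = x * Q x (int k + 1 - int n) (int k - 1)"
    by (rule Q_overlap) (use assms in auto)
  have c: "Q (x + of_int (int k)) (1 - int n) (-1) = Q x (int k + 1 - int n) (int k - 1)"
    by (subst Q_shift) (simp add: algebra_simps)
  show ?thesis using a b c by (simp add: poch_Q algebra_simps)
qed

lemma K2:
  "pochhammer (1 + u) k * pochhammer (1 - u) j * u * (-1)^j
     = Q (u + of_nat k + 1) (-(int k + int j + 1)) (-1)"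
proof -
  have a: "pochhammer (1 + u) k = Q u 1 (int k)"
    using Q_shift[of u 1 0 "int k - 1"] by (simp add: poch_Q add.commute)
  have b: "Q u (- int j) (int k) = Q u (- int j) (-1) * u * Q u 1 (int k)"
    by (rule Q_mid) auto
  have c: "Q (u + of_int (int k + 1)) (-(int k + int j + 1)) (-1) = Q u (- int j) (int k)"
    by (subst Q_shift) (simp add: algebra_simps)
  have d: "((-1::complex)^j)^2 = 1" by (simp add: power_mult[symmetric] mult.commute[of j] power_mult)
  show ?thesis using a b c d by (simp add: poch_neg algebra_simps power2_eq_square)
qed

lemma K3:
  "pochhammer (2 - b) k * pochhammer (2 + b) j * (-1)^j * ((-b-1) * (-b) * (-b+1))
     = Q (-b + of_nat k + 1) (-(int k + int j + 2)) 0"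
proof -
  define w where "w = -b"
  have a: "pochhammer (2 - b) k = Q w 2 (int k + 1)"
    using Q_shift[of w 2 0 "int k - 1"] by (simp add: poch_Q w_def add.commute)
  have "pochhammer (2 + b) j = pochhammer (1 - (w - 1)) j" by (simp add: w_def)
  also have "\<dots> = (-1)^j * Q (w + of_int (-1)) (- int j) (-1)" using poch_neg[of "w-1" j] by simp
  also have "Q (w + of_int (-1)) (- int j) (-1) = Q w (- int j - 1) (-2)"
    by (subst Q_shift) simp
  finally have b: "pochhammer (2 + b) j = (-1)^j * Q w (- int j - 1) (-2)" .
  have c: "Q (w + of_int (int k + 1)) (-(int k + int j + 2)) 0 = Q w (- int j - 1) (int k + 1)"
  proof -
    have e: "- (int k + int j + 2) + (int k + 1) = - int j - 1" by simp
    show ?thesis by (subst Q_shift) (simp only: e add_0_left)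
  qed
  have s1: "Q w (- int j - 1) (int k + 1) = Q w (- int j - 1) (-2) * Q w (-1) (int k + 1)"
    using Q_split[of "- int j - 1" "-2" "int k + 1" w] by simp
  have s2: "Q w (-1) (int k + 1) = (w - 1) * Q w 0 (int k + 1)"
    using Q_split[of "-1" "-1" "int k + 1" w] by (simp add: Q_single)
  have s3: "Q w 0 (int k + 1) = w * Q w 1 (int k + 1)"
    using Q_split[of 0 0 "int k + 1" w] by (simp add: Q_single)
  have s4: "Q w 1 (int k + 1) = (w + 1) * Q w 2 (int k + 1)"
    using Q_split[of 1 1 "int k + 1" w] by (simp add: Q_single)
  have d: "((-1::complex)^j)^2 = 1" by (simp add: power_mult[symmetric] mult.commute[of j] power_mult)
  have e: "Q (-b + of_nat k + 1) (-(int k + int j + 2)) 0 = Q w (- int j - 1) (int k + 1)"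
    using c by (simp add: w_def algebra_simps)
  have f: "(-b-1) * (-b) * (-b+1) = (w-1) * w * (w+1)" by (simp add: w_def)
  have "pochhammer (2 - b) k * pochhammer (2 + b) j * (-1)^j * ((w-1) * w * (w+1))
      = ((-1)^j * (-1)^j) * (Q w 2 (int k + 1) * Q w (- int j - 1) (-2) * ((w-1) * w * (w+1)))"
    by (simp only: a b mult_ac)
  also have "\<dots> = Q w 2 (int k + 1) * Q w (- int j - 1) (-2) * ((w-1) * w * (w+1))"
    using d by (simp add: power2_eq_square)
  also have "\<dots> = Q w (- int j - 1) (int k + 1)"
    by (simp only: s1 s2 s3 s4 mult_ac)
  finally show ?thesis using e f by simp
qed

lemma K4:
  assumes "k \<le> N"
  shows "(\<Prod>t\<in>{..N}-{k}. (of_nat k - of_nat t :: complex)) = (-1)^(N-k) * fact k * fact (N-k)"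
proof -
  have "(\<Prod>t\<in>{..N}-{k}. (of_nat k - of_nat t :: complex))
        = (\<Prod>t\<in>int ` ({..N}-{k}). of_nat k - of_int t)"
    by (subst prod.reindex) auto
  also have "int ` ({..N}-{k}) = {0..int k - 1} \<union> {int k + 1..int N}"
  proof (rule set_eqI, rule iffI)
    fix x assume "x \<in> int ` ({..N}-{k})" then show "x \<in> {0..int k - 1} \<union> {int k + 1..int N}" by auto
  next
    fix x assume x: "x \<in> {0..int k - 1} \<union> {int k + 1..int N}"
    then have x0: "0 \<le> x" "x \<le> int N" "x \<noteq> int k" using assms by auto
    then have "x = int (nat x)" "nat x \<in> {..N}-{k}" by auto
    then show "x \<in> int ` ({..N}-{k})" by (metis imageI)
  qed
  also have "(\<Prod>t\<in>{0..int k - 1} \<union> {int k + 1..int N}. (of_nat k - of_int t :: complex))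
      = (\<Prod>t\<in>{0..int k - 1}. of_nat k - of_int t) * (\<Prod>t\<in>{int k + 1..int N}. of_nat k - of_int t)"
    by (rule prod.union_disjoint) auto
  also have "(\<Prod>t\<in>{0..int k - 1}. (of_nat k - of_int t :: complex)) = Q (0 + of_int (int k)) (1 - int k) 0"
    by (subst prod_minus_Q) simp
  also have "\<dots> = fact k" by (subst Q_shift) (simp add: fact_Q)
  also have "(\<Prod>t\<in>{int k + 1..int N}. (of_nat k - of_int t :: complex)) = Q (0 + of_int (int k)) (- int N) (- int k - 1)"
    by (subst prod_minus_Q) simp
  also have "\<dots> = Q 0 (int k - int N) (-1)" by (subst Q_shift) (simp add: algebra_simps)
  also have "\<dots> = (-1)^(N-k) * fact (N-k)"
    using assms by (subst Q_refl) (simp add: fact_Q nat_diff_distrib of_nat_diff)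
  finally show ?thesis by simp
qed

lemma K5:
  assumes "1 \<le> n"
  shows "(\<Prod>k'\<in>{..<n-1}. w0 - (of_nat k' + 1 - b)) = Q (w0 + b) (1 - int n) (-1)"
proof -
  have "(\<Prod>k'\<in>{..<n-1}. w0 - (of_nat k' + 1 - b)) = (\<Prod>t\<in>int ` {0..<n-1}. (w0 + b - 1) - of_int t)"
    by (subst prod.reindex) (auto simp: lessThan_atLeast0 algebra_simps)
  also have "int ` {0..<n-1} = {0..int n - 2}" using assms by (auto simp: image_int_atLeastLessThan)
  also have "(\<Prod>t\<in>{0..int n - 2}. (w0 + b - 1) - of_int t) = Q (w0 + b + of_int (-1)) (2 - int n) 0"
    by (subst prod_minus_Q) simp
  also have "\<dots> = Q (w0 + b) (1 - int n) (-1)" by (subst Q_shift) simp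
  finally show ?thesis .
qed

lemma K6: "(\<Prod>t\<in>{..n}. z - of_nat t) = Q z (- int n) 0"
proof -
  have "(\<Prod>t\<in>{..n}. z - of_nat t) = (\<Prod>t\<in>int ` {0..n}. z - of_int t)"
    by (subst prod.reindex) (auto simp: atMost_atLeast0)
  also have "int ` {0..n} = {0..int n}" by (simp add: image_int_atLeastAtMost)
  finally show ?thesis by (simp add: prod_minus_Q)
qed




lemma prod_list_upt: "prod_list (map g [1..<m+1]) = (\<Prod>i\<in>{1..m}. g i)"
proof -
  have "prod_list (map g [1..<m+1]) = prod g (set [1..<m+1])"
    by (simp only: prod.distinct_set_conv_list distinct_upt)
  also have "set [1..<m+1] = {1..m}" by auto
  finally show ?thesis .
qed

lemma hyp_nth:
  "fps_nth (hyp_fps (map f [1..<m+1] @ [g]) (map h [1..<m+1])) k =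
     (\<Prod>i\<in>{1..m}. pochhammer (f i) k) * pochhammer g k / ((\<Prod>l\<in>{1..m}. pochhammer (h l) k) * fact k)"
  unfolding hyp_fps_def fps_nth_Abs_fps map_append map_map prod_list.append o_def
  by (simp only: prod_list_upt[where g="\<lambda>i. pochhammer (f i) k"] prod_list_upt[where g="\<lambda>i. pochhammer (h i) k"]
     list.map prod_list.Cons prod_list.Nil mult_1_right)

lemma poch_nz: "(x::complex) \<notin> \<int> \<Longrightarrow> pochhammer x k \<noteq> 0"
  by (auto simp: pochhammer_eq_0_iff)

lemma notint_neg: "(x::complex) \<notin> \<int> \<Longrightarrow> - x \<notin> \<int>"
  using Ints_minus[of "-x"] by auto
lemma notint_add: "(x::complex) \<notin> \<int> \<Longrightarrow> c \<in> \<int> \<Longrightarrow> c + x \<notin> \<int>"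
  using Ints_diff[of "c + x" c] by auto
lemma notint_sub: "(x::complex) \<notin> \<int> \<Longrightarrow> c \<in> \<int> \<Longrightarrow> c - x \<notin> \<int>"
  using Ints_diff[of c "c - x"] by auto
lemma notint_nz: "(x::complex) \<notin> \<int> \<Longrightarrow> x \<noteq> 0"
  by auto

lemma alg1:
  fixes P PA Pa0 PB fk fj QA Qa0 QB A B a0 s t :: complex
  assumes "PA = QA * A * t" "Pa0 = Qa0 * a0 * s" "PB = QB * B * t" "P = B / A"
    "A \<noteq> 0" "B \<noteq> 0" "QB \<noteq> 0" "fk \<noteq> 0" "fj \<noteq> 0" "s * s = 1" "t \<noteq> 0"
  shows "P * (PA * Pa0 / (PB * fk * fj)) = a0 * (QA * Qa0 / ((s * fk * fj) * QB))"
proof -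
  have s0: "s \<noteq> 0" using assms(10) by auto
  have "P * (PA * Pa0 / (PB * fk * fj)) = B / A * (QA * A * t * (Qa0 * a0 * s) / (QB * B * t * fk * fj))"
    using assms(1-4) by simp
  also have "\<dots> = a0 * (QA * Qa0 / ((s * fk * fj) * QB)) * (s * s)"
    using assms(5-9,11) s0 by (simp add: field_simps)
  finally show ?thesis using assms(10) by simp
qed

lemma alg2:
  fixes c PU Pu0 Pw PV fk fj QU Qu0 Qw QV U u0 V W a0 sj t :: complex
  assumes "QU = PU * U * (sj * t)" "Qu0 = Pu0 * u0 * sj" "Qw = Pw * sj * W"
    "QV = PV * V * t" "c = a0 * u0 * U / (W * V)"
    "Pw \<noteq> 0" "PV \<noteq> 0" "fk \<noteq> 0" "fj \<noteq> 0" "W \<noteq> 0" "V \<noteq> 0" "sj * sj = 1" "t \<noteq> 0"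
  shows "c * (PU * Pu0 / (Pw * PV * fk * fj)) = a0 * (QU * Qu0 / (Qw * (QV * (sj * fk * fj))))"
proof -
  have s0: "sj \<noteq> 0" using assms(12) by auto
  have "a0 * (QU * Qu0 / (Qw * (QV * (sj * fk * fj))))
     = a0 * (PU * U * (sj * t) * (Pu0 * u0 * sj) / (Pw * sj * W * (PV * V * t * (sj * fk * fj))))"
    using assms(1-4) by simp
  also have "\<dots> = c * (PU * Pu0 / (Pw * PV * fk * fj))"
    using assms(5-11,13) s0 by (simp add: field_simps)
  finally show ?thesis using assms(12) by simp
qed




lemma alg3:
  fixes a0 u0 ar b U' V :: complex
  assumes "b \<noteq> 0" "b^2 - 1 \<noteq> 0" "V \<noteq> 0"
  shows "a0 * u0 * (b - ar) / (b * (b^2 - 1)) * (U' / V) = a0 * u0 * ((ar - b) * U') / (((-b-1) * (-b) * (-b+1)) * V)"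
proof -
  have "(-b-1) * (-b) * (-b+1) = - (b * (b^2 - 1))" by (simp add: algebra_simps power2_eq_square)
  then show ?thesis using assms by (simp add: field_simps)
qed

lemma coeff_id:
  fixes m n :: nat and a b :: "nat \<Rightarrow> complex"
  assumes m1: "m \<ge> 1" and n1: "n \<ge> 1"
    and ab: "\<And>i j. i \<le> m \<Longrightarrow> 1 \<le> j \<Longrightarrow> j \<le> m \<Longrightarrow> a i - b j \<notin> \<int>"
    and a0: "\<And>i. i \<le> m \<Longrightarrow> a i - 0 \<notin> \<int>"
    and b0: "\<And>j. 1 \<le> j \<Longrightarrow> j \<le> m \<Longrightarrow> 0 - b j \<notin> \<int>"
    and bb: "\<And>i j. 1 \<le> i \<Longrightarrow> i < j \<Longrightarrow> j \<le> m \<Longrightarrow> b i - b j \<notin> \<int>"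
  defines "A \<equiv> \<lambda>k. (\<Prod>i\<in>{1..m}. pochhammer (a i) k) * pochhammer (a 0) k /
                    ((\<Prod>l\<in>{1..m}. pochhammer (b l) k) * fact k)"
      and "A' \<equiv> \<lambda>k. (\<Prod>i\<in>{1..m}. pochhammer (- a i) k) * pochhammer (- a 0) k /
                    ((\<Prod>l\<in>{1..m}. pochhammer (- b l) k) * fact k)"
      and "B \<equiv> \<lambda>r k. (\<Prod>i\<in>{1..m}. pochhammer (1 + (a i - b r)) k) * pochhammer (1 + (a 0 - b r)) k /
                    ((\<Prod>l\<in>{1..m}. pochhammer (if l = r then 2 - b r else 1 + (b l - b r)) k) * fact k)"
      and "B' \<equiv> \<lambda>r k. (\<Prod>i\<in>{1..m}. pochhammer (1 - (a i - b r)) k) * pochhammer (1 - (a 0 - b r)) k /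
                    ((\<Prod>l\<in>{1..m}. pochhammer (if l = r then 2 + b r else 1 - (b l - b r)) k) * fact k)"
      and "c \<equiv> \<lambda>r. a 0 * (a 0 - b r) * (b r - a r) / (b r * ((b r)^2 - 1)) *
                        (\<Prod>l\<in>{1..m} - {r}. (a l - b r) / (b l - b r))"
  shows "(\<Prod>l=1..m. b l / a l) * (\<Sum>k=0..n. A k * A' (n-k))
          + (\<Sum>r=1..m. c r * (\<Sum>k<n-1. B r k * B' r (n-2-k))) = 0"
proof -
  have aZ: "a i \<notin> \<int>" if "i \<le> m" for i using a0[OF that] by simp
  have bZ: "b j \<notin> \<int>" if "1 \<le> j" "j \<le> m" for j using notint_neg[OF b0[OF that]] by simp
  have abZ: "a i - b j \<notin> \<int>" if "i \<le> m" "1 \<le> j" "j \<le> m" for i j using ab that by blast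
  have bbZ: "b i - b j \<notin> \<int>" if "i \<in> {1..m}" "j \<in> {1..m}" "i \<noteq> j" for i j
  proof (cases "i < j")
    case True then show ?thesis using bb that by auto
  next
    case False then have "j < i" using that by auto
    then have "b j - b i \<notin> \<int>" using bb that by auto
    then show ?thesis using notint_neg[of "b j - b i"] by simp
  qed
  define Zi where "Zi = (of_nat :: nat \<Rightarrow> complex) ` {..n}"
  define Zr where "Zr r = (\<lambda>k. of_nat k + 1 - b r) ` {..<n-1}" for r
  define Z where "Z = Zi \<union> (\<Union>r\<in>{1..m}. Zr r)"
  define D where "D z = (\<Prod>w\<in>Z-{z}. z - w)" for z
  define Np where "Np = (\<Prod>i\<in>{0..m}. \<Prod>t\<in>{1 - int n..-1}. [:a i + of_int t, 1:])"
  have polyN: "poly Np s = (\<Prod>i\<in>{0..m}. Q (a i + s) (1 - int n) (-1))" for s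
    unfolding Np_def poly_prod Q_def by (intro prod.cong refl) (simp add: algebra_simps)
  have degN: "degree Np \<le> (m+1) * (n-1)"
  proof -
    have "degree Np \<le> (\<Sum>i\<in>{0..m}. degree (\<Prod>t\<in>{1 - int n..-1}. [:a i + of_int t, 1:]))"
      unfolding Np_def using degree_prod_sum_le[of "{0..m}"] by (simp add: o_def)
    also have "\<dots> \<le> (\<Sum>i\<in>{0..m}. n - 1)"
    proof (rule sum_mono)
      fix i
      have "degree (\<Prod>t\<in>{1 - int n..-1}. [:a i + of_int t, 1:]) \<le> nat (int n - 1)"
        using degree_prod_sum_le[of "{1 - int n..-1}" "\<lambda>t. [:a i + of_int t, 1:]"] by simp
      also have "nat (int n - 1) = n - 1" using n1 by simp
      finally show "degree (\<Prod>t\<in>{1 - int n..-1}. [:a i + of_int t, 1:]) \<le> n - 1" .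
    qed
    also have "\<dots> = (m+1) * (n-1)" by simp
    finally show ?thesis .
  qed
  have finZi: "finite Zi" and finZr: "finite (Zr r)" for r by (auto simp: Zi_def Zr_def)
  have finZ: "finite Z" by (auto simp: Z_def finZi finZr)
  have d1: "Zi \<inter> Zr r = {}" if "r \<in> {1..m}" for r
  proof -
    have brZ: "b r \<notin> \<int>" using bZ that by auto
    have ne: "(of_nat x::complex) \<noteq> of_nat k + 1 - b r" for x k
    proof
      assume "(of_nat x::complex) = of_nat k + 1 - b r"
      then have "b r = of_int (int k + 1 - int x)" by (simp add: algebra_simps)
      then show False using brZ by (metis Ints_of_int)
    qed
    show ?thesis unfolding Zi_def Zr_def using ne by blast
  qed
  have d2: "Zr r \<inter> Zr r' = {}" if "r \<in> {1..m}" "r' \<in> {1..m}" "r \<noteq> r'" for r r'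
  proof -
    have brZ: "b r - b r' \<notin> \<int>" using bbZ that by auto
    have ne: "(of_nat x::complex) + 1 - b r \<noteq> of_nat k + 1 - b r'" for x k
    proof
      assume "(of_nat x::complex) + 1 - b r = of_nat k + 1 - b r'"
      then have "b r - b r' = of_int (int x - int k)" by (simp add: algebra_simps)
      then show False using brZ by (metis Ints_of_int)
    qed
    show ?thesis unfolding Zr_def using ne by blast
  qed
  have injZr: "inj_on (\<lambda>k. (of_nat k::complex) + 1 - b r) A" for r A
    by (auto simp: inj_on_def)
  have injZi: "inj_on (of_nat :: nat \<Rightarrow> complex) A" for A
    by (auto simp: inj_on_def)
  have dU: "Zi \<inter> (\<Union>r\<in>{1..m}. Zr r) = {}" using d1 by blast
  have cardZ: "card Z = n + 1 + m * (n-1)"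
  proof -
    have c1: "card Zi = n + 1" unfolding Zi_def by (subst card_image[OF injZi]) simp
    have c2: "card (Zr r) = n - 1" for r unfolding Zr_def by (subst card_image[OF injZr]) simp
    have "card (\<Union>r\<in>{1..m}. Zr r) = (\<Sum>r\<in>{1..m}. card (Zr r))"
      by (rule card_UN_disjoint) (use finZr d2 in auto)
    also have "\<dots> = m * (n-1)" by (simp add: c2)
    finally have c3: "card (\<Union>r\<in>{1..m}. Zr r) = m * (n-1)" .
    have "card Z = card Zi + card (\<Union>r\<in>{1..m}. Zr r)"
      unfolding Z_def by (rule card_Un_disjoint) (use finZi finZr dU in auto)
    then show ?thesis using c1 c3 by simp
  qed
  have lag: "(\<Sum>z\<in>Z. poly Np z / D z) = 0"
  proof -
    have "(m+1)*(n-1) + 2 \<le> n + 1 + m*(n-1)" using n1 by (cases n) auto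
    then have "degree Np + 2 \<le> card Z" using degN cardZ by linarith
    then show ?thesis unfolding D_def by (rule lagrange_zero[OF finZ])
  qed
  have sumZ: "(\<Sum>z\<in>Z. poly Np z / D z) = (\<Sum>k=0..n. poly Np (of_nat k) / D (of_nat k))
       + (\<Sum>r=1..m. \<Sum>k<n-1. poly Np (of_nat k + 1 - b r) / D (of_nat k + 1 - b r))"
  proof -
    let ?f = "\<lambda>z. poly Np z / D z"
    have "(\<Sum>z\<in>Z. ?f z) = (\<Sum>z\<in>Zi. ?f z) + (\<Sum>z\<in>(\<Union>r\<in>{1..m}. Zr r). ?f z)"
      unfolding Z_def by (rule sum.union_disjoint) (use finZi finZr dU in auto)
    also have "(\<Sum>z\<in>(\<Union>r\<in>{1..m}. Zr r). ?f z) = (\<Sum>r\<in>{1..m}. \<Sum>z\<in>Zr r. ?f z)"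
      by (rule sum.UNION_disjoint) (use finZr d2 in auto)
    also have "(\<Sum>z\<in>Zi. ?f z) = (\<Sum>k=0..n. ?f (of_nat k))"
      unfolding Zi_def by (subst sum.reindex[OF injZi]) (simp add: atMost_atLeast0)
    finally have e: "(\<Sum>z\<in>Z. ?f z) = (\<Sum>k=0..n. ?f (of_nat k)) + (\<Sum>r\<in>{1..m}. \<Sum>z\<in>Zr r. ?f z)" .
    have zr: "(\<Sum>z\<in>Zr r. ?f z) = (\<Sum>k<n-1. ?f (of_nat k + 1 - b r))" for r
      unfolding Zr_def by (subst sum.reindex[OF injZr]) simp
    show ?thesis unfolding e zr by simp
  qed
  have Dsplit: "D z = (\<Prod>w\<in>Zi-{z}. z - w) * (\<Prod>r\<in>{1..m}. \<Prod>w\<in>Zr r-{z}. z - w)" for z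
  proof -
    have "Z - {z} = (Zi - {z}) \<union> (\<Union>r\<in>{1..m}. Zr r - {z})" unfolding Z_def by blast
    then have "D z = (\<Prod>w\<in>(Zi - {z}) \<union> (\<Union>r\<in>{1..m}. Zr r - {z}). z - w)" unfolding D_def by simp
    also have "\<dots> = (\<Prod>w\<in>Zi-{z}. z - w) * (\<Prod>w\<in>(\<Union>r\<in>{1..m}. Zr r - {z}). z - w)"
      by (rule prod.union_disjoint) (use finZi finZr dU in auto)
    also have "(\<Prod>w\<in>(\<Union>r\<in>{1..m}. Zr r - {z}). z - w) = (\<Prod>r\<in>{1..m}. \<Prod>w\<in>Zr r-{z}. z - w)"
      by (rule prod.UNION_disjoint) (use finZr d2 in blast)+
    finally show ?thesis .
  qed
  have claim1: "(\<Prod>l=1..m. b l / a l) * (A k * A' (n-k)) = a 0 * (poly Np (of_nat k) / D (of_nat k))"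
    if kn: "k \<le> n" for k
  proof -
    define s where "s = ((-1::complex)^(n-k))"
    have ss: "s * s = 1" unfolding s_def power_mult_distrib[symmetric] by simp
    have kZi: "(of_nat k::complex) \<in> Zi" using kn by (simp add: Zi_def)
    have kZ: "(of_nat k::complex) \<notin> Zr r" if "r \<in> {1..m}" for r using d1[OF that] kZi by blast
    have D1a: "(\<Prod>w\<in>Zi-{of_nat k}. of_nat k - w) = s * fact k * fact (n-k)"
    proof -
      have "Zi - {of_nat k} = of_nat ` ({..n} - {k})" unfolding Zi_def by (auto simp: image_iff)
      then have "(\<Prod>w\<in>Zi-{of_nat k}. (of_nat k::complex) - w) = (\<Prod>t\<in>{..n}-{k}. of_nat k - of_nat t)"
        by (simp add: prod.reindex[OF injZi])
      also have "\<dots> = s * fact k * fact (n-k)" unfolding s_def by (rule K4[OF kn])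
      finally show ?thesis .
    qed
    have D1b: "(\<Prod>w\<in>Zr r-{of_nat k}. of_nat k - w) = Q (b r + of_nat k) (1 - int n) (-1)"
      if "r \<in> {1..m}" for r
    proof -
      have "(\<Prod>w\<in>Zr r-{of_nat k}. of_nat k - w) = (\<Prod>w\<in>Zr r. of_nat k - w)" using kZ[OF that] by simp
      also have "\<dots> = (\<Prod>k'\<in>{..<n-1}. of_nat k - (of_nat k' + 1 - b r))"
        unfolding Zr_def by (simp add: prod.reindex[OF injZr])
      also have "\<dots> = Q (of_nat k + b r) (1 - int n) (-1)" by (rule K5[OF n1])
      finally show ?thesis by (simp add: add.commute)
    qed
    have D1: "D (of_nat k) = (s * fact k * fact (n-k)) * (\<Prod>r\<in>{1..m}. Q (b r + of_nat k) (1 - int n) (-1))"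
    proof -
      have "(\<Prod>r\<in>{1..m}. \<Prod>w\<in>Zr r-{of_nat k}. of_nat k - w) = (\<Prod>r\<in>{1..m}. Q (b r + of_nat k) (1 - int n) (-1))"
        by (rule prod.cong[OF refl]) (rule D1b)
      then show ?thesis unfolding Dsplit D1a by simp
    qed
    have z0m: "{0..m} = insert 0 {1..m}" by auto
    have N1: "poly Np (of_nat k) = (\<Prod>i\<in>{1..m}. Q (a i + of_nat k) (1 - int n) (-1)) * Q (a 0 + of_nat k) (1 - int n) (-1)"
      unfolding polyN z0m by (simp add: mult.commute)
    have AA: "A k * A' (n-k) = (\<Prod>i\<in>{1..m}. pochhammer (a i) k * pochhammer (-a i) (n-k)) * (pochhammer (a 0) k * pochhammer (-a 0) (n-k))
        / ((\<Prod>l\<in>{1..m}. pochhammer (b l) k * pochhammer (-b l) (n-k)) * fact k * fact (n-k))"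
      unfolding A_def A'_def prod.distrib by (simp add: times_divide_times_eq mult_ac)
    have PA: "(\<Prod>i\<in>{1..m}. pochhammer (a i) k * pochhammer (-a i) (n-k))
        = (\<Prod>i\<in>{1..m}. Q (a i + of_nat k) (1 - int n) (-1)) * (\<Prod>i\<in>{1..m}. a i) * s^m"
    proof -
      have "(\<Prod>i\<in>{1..m}. pochhammer (a i) k * pochhammer (-a i) (n-k))
          = (\<Prod>i\<in>{1..m}. Q (a i + of_nat k) (1 - int n) (-1) * a i * s)"
        by (rule prod.cong) (simp_all add: K1[OF kn n1] s_def mult_ac)
      then show ?thesis by (simp add: prod.distrib)
    qed
    have PB: "(\<Prod>i\<in>{1..m}. pochhammer (b i) k * pochhammer (-b i) (n-k))
        = (\<Prod>i\<in>{1..m}. Q (b i + of_nat k) (1 - int n) (-1)) * (\<Prod>i\<in>{1..m}. b i) * s^m"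
    proof -
      have "(\<Prod>i\<in>{1..m}. pochhammer (b i) k * pochhammer (-b i) (n-k))
          = (\<Prod>i\<in>{1..m}. Q (b i + of_nat k) (1 - int n) (-1) * b i * s)"
        by (rule prod.cong) (simp_all add: K1[OF kn n1] s_def mult_ac)
      then show ?thesis by (simp add: prod.distrib)
    qed
    have Pa0: "pochhammer (a 0) k * pochhammer (-a 0) (n-k) = Q (a 0 + of_nat k) (1 - int n) (-1) * a 0 * s"
      by (simp add: K1[OF kn n1] s_def mult_ac)
    have P: "(\<Prod>l=1..m. b l / a l) = (\<Prod>l=1..m. b l) / (\<Prod>l=1..m. a l)" by (rule prod_dividef)
    have Anz: "(\<Prod>l=1..m. a l) \<noteq> 0" using aZ by (auto simp: prod_zero_iff) (metis Ints_0)
    have Bnz: "(\<Prod>l=1..m. b l) \<noteq> 0" using bZ by (auto simp: prod_zero_iff) (metis Ints_0)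
    have QBnz: "(\<Prod>i\<in>{1..m}. Q (b i + of_nat k) (1 - int n) (-1)) \<noteq> 0"
    proof -
      have "b i + of_nat k \<notin> \<int>" if "i \<in> {1..m}" for i
        using notint_add[OF bZ, of i "of_nat k"] that by (simp add: add.commute)
      then show ?thesis by (auto simp: prod_zero_iff Q_nz)
    qed
    have snz: "s^m \<noteq> 0" using ss by (metis mult_zero_left power_not_zero zero_neq_one)
    show ?thesis unfolding AA N1 D1
      by (rule alg1[OF PA Pa0 PB P Anz Bnz QBnz _ _ ss snz]) simp_all
  qed
  have claim2: "c r * (B r k * B' r (n-2-k)) = a 0 * (poly Np (of_nat k + 1 - b r) / D (of_nat k + 1 - b r))"
    if rm: "r \<in> {1..m}" and kn: "k < n-1" for r k
  proof -
    define j where "j = n-2-k"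
    have nkj: "n = k + j + 2" using kn by (simp add: j_def)
    define sj where "sj = ((-1::complex)^j)"
    have ss: "sj * sj = 1" unfolding sj_def power_mult_distrib[symmetric] by simp
    define z where "z = (of_nat k :: complex) + 1 - b r"
    have zZr: "z \<in> Zr r" using kn by (simp add: Zr_def z_def)
    have zZi: "z \<notin> Zi" using d1[OF rm] zZr by blast
    have zZr': "z \<notin> Zr r'" if "r' \<in> {1..m}" "r' \<noteq> r" for r' using d2[OF rm that(1)] that(2) zZr by blast
    define W where "W = (-b r-1) * (-b r) * (-b r+1)"
    define Qw where "Qw = Q (-b r + of_nat k + 1) (-(int k + int j + 2)) 0"
    define Qv where "Qv l = Q ((b l - b r) + of_nat k + 1) (-(int k + int j + 1)) (-1)" for l
    define Qu where "Qu i = Q ((a i - b r) + of_nat k + 1) (-(int k + int j + 1)) (-1)" for i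
    define Pv where "Pv l = pochhammer (1 + (b l - b r)) k * pochhammer (1 - (b l - b r)) j" for l
    define Pu where "Pu i = pochhammer (1 + (a i - b r)) k * pochhammer (1 - (a i - b r)) j" for i
    define Pw where "Pw = pochhammer (2 - b r) k * pochhammer (2 + b r) j"
    have D2a: "(\<Prod>w\<in>Zi-{z}. z - w) = Qw"
    proof -
      have "(\<Prod>w\<in>Zi-{z}. z - w) = (\<Prod>w\<in>Zi. z - w)" using zZi by simp
      also have "\<dots> = (\<Prod>t\<in>{..n}. z - of_nat t)" unfolding Zi_def by (simp add: prod.reindex[OF injZi])
      also have "\<dots> = Q z (- int n) 0" by (rule K6)
      finally show ?thesis unfolding Qw_def z_def using nkj by (simp add: algebra_simps)
    qed
    have D2b: "(\<Prod>w\<in>Zr r'-{z}. z - w) = Qv r'" if "r' \<in> {1..m} - {r}" for r'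
    proof -
      have "(\<Prod>w\<in>Zr r'-{z}. z - w) = (\<Prod>w\<in>Zr r'. z - w)" using zZr' that by simp
      also have "\<dots> = (\<Prod>k'\<in>{..<n-1}. z - (of_nat k' + 1 - b r'))"
        unfolding Zr_def by (simp add: prod.reindex[OF injZr])
      also have "\<dots> = Q (z + b r') (1 - int n) (-1)" by (rule K5[OF n1])
      finally show ?thesis unfolding Qv_def z_def using nkj by (simp add: algebra_simps)
    qed
    have D2c: "(\<Prod>w\<in>Zr r-{z}. z - w) = sj * fact k * fact j"
    proof -
      have "Zr r - {z} = (\<lambda>k'. of_nat k' + 1 - b r) ` ({..<n-1} - {k})"
        unfolding Zr_def z_def using kn by (auto simp: image_iff)
      then have "(\<Prod>w\<in>Zr r-{z}. z - w) = (\<Prod>k'\<in>{..<n-1} - {k}. z - (of_nat k' + 1 - b r))"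
        by (simp add: prod.reindex[OF injZr])
      also have "\<dots> = (\<Prod>k'\<in>{..n-2} - {k}. (of_nat k - of_nat k' :: complex))"
      proof -
        have "{..<n-1} = {..n-2}" using kn by auto
        then show ?thesis by (simp add: z_def)
      qed
      also have "\<dots> = (-1)^(n-2-k) * fact k * fact (n-2-k)" by (rule K4) (use kn in auto)
      finally show ?thesis by (simp add: sj_def j_def)
    qed
    have D2: "D z = Qw * ((\<Prod>l\<in>{1..m}-{r}. Qv l) * (sj * fact k * fact j))"
    proof -
      have "(\<Prod>r'\<in>{1..m}. \<Prod>w\<in>Zr r'-{z}. z - w) = (\<Prod>w\<in>Zr r-{z}. z - w) * (\<Prod>r'\<in>{1..m}-{r}. \<Prod>w\<in>Zr r'-{z}. z - w)"
        by (rule prod.remove) (use rm in auto)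
      also have "(\<Prod>r'\<in>{1..m}-{r}. \<Prod>w\<in>Zr r'-{z}. z - w) = (\<Prod>l\<in>{1..m}-{r}. Qv l)"
        by (rule prod.cong[OF refl]) (rule D2b)
      finally show ?thesis unfolding Dsplit D2a D2c by (simp add: mult_ac)
    qed
    have z0m: "{0..m} = insert 0 {1..m}" by auto
    have N2: "poly Np z = (\<Prod>i\<in>{1..m}. Qu i) * Qu 0"
    proof -
      have "poly Np z = (\<Prod>i\<in>{0..m}. Qu i)"
        unfolding polyN Qu_def z_def using nkj by (intro prod.cong refl) (simp add: algebra_simps)
      then show ?thesis unfolding z0m by (simp add: mult.commute)
    qed
    have ifprod: "(\<Prod>l\<in>{1..m}. pochhammer (if l = r then X else Y l) q) = pochhammer X q * (\<Prod>l\<in>{1..m}-{r}. pochhammer (Y l) q)"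
      for X Y q
    proof -
      have "(\<Prod>l\<in>{1..m}. pochhammer (if l = r then X else Y l) q)
         = pochhammer (if r = r then X else Y r) q * (\<Prod>l\<in>{1..m}-{r}. pochhammer (if l = r then X else Y l) q)"
        by (rule prod.remove) (use rm in auto)
      also have "(\<Prod>l\<in>{1..m}-{r}. pochhammer (if l = r then X else Y l) q) = (\<Prod>l\<in>{1..m}-{r}. pochhammer (Y l) q)"
        by (rule prod.cong) auto
      finally show ?thesis by simp
    qed
    have BB: "B r k * B' r j = (\<Prod>i\<in>{1..m}. Pu i) * Pu 0 / (Pw * (\<Prod>l\<in>{1..m}-{r}. Pv l) * fact k * fact j)"
      unfolding B_def B'_def ifprod Pu_def Pv_def Pw_def prod.distrib
      by (simp add: times_divide_times_eq mult_ac)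
    have K2': "Qu i = Pu i * (a i - b r) * sj" for i
      unfolding Qu_def Pu_def sj_def using K2[of "a i - b r" k j] by (simp add: mult_ac)
    have K2v: "Qv l = Pv l * (b l - b r) * sj" for l
      unfolding Qv_def Pv_def sj_def using K2[of "b l - b r" k j] by (simp add: mult_ac)
    have K3': "Qw = Pw * sj * W"
      unfolding Qw_def Pw_def sj_def W_def using K3[of "b r" k j] by (simp add: mult_ac)
    have cardr: "card ({1..m} - {r}) = m - 1" using rm by simp
    have QU: "(\<Prod>i\<in>{1..m}. Qu i) = (\<Prod>i\<in>{1..m}. Pu i) * (\<Prod>i\<in>{1..m}. a i - b r) * (sj * sj^(m-1))"
    proof -
      have "(\<Prod>i\<in>{1..m}. Qu i) = (\<Prod>i\<in>{1..m}. Pu i * (a i - b r) * sj)" by (simp add: K2')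
      also have "\<dots> = (\<Prod>i\<in>{1..m}. Pu i) * (\<Prod>i\<in>{1..m}. a i - b r) * sj^m" by (simp add: prod.distrib)
      also have "sj^m = sj * sj^(m-1)" using m1 by (metis power_eq_if not_one_le_zero)
      finally show ?thesis .
    qed
    have QV: "(\<Prod>l\<in>{1..m}-{r}. Qv l) = (\<Prod>l\<in>{1..m}-{r}. Pv l) * (\<Prod>l\<in>{1..m}-{r}. b l - b r) * sj^(m-1)"
    proof -
      have "(\<Prod>l\<in>{1..m}-{r}. Qv l) = (\<Prod>l\<in>{1..m}-{r}. Pv l * (b l - b r) * sj)" by (simp add: K2v)
      also have "\<dots> = (\<Prod>l\<in>{1..m}-{r}. Pv l) * (\<Prod>l\<in>{1..m}-{r}. b l - b r) * sj^(card ({1..m}-{r}))"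
        by (simp only: prod.distrib prod_constant)
      also have "\<dots> = (\<Prod>l\<in>{1..m}-{r}. Pv l) * (\<Prod>l\<in>{1..m}-{r}. b l - b r) * sj^(m-1)"
        by (simp only: cardr)
      finally show ?thesis .
    qed
    have brZ: "b r \<notin> \<int>" using bZ rm by auto
    have Vnz: "(\<Prod>l\<in>{1..m}-{r}. b l - b r) \<noteq> 0"
    proof -
      have "b l - b r \<noteq> 0" if "l \<in> {1..m}-{r}" for l using bbZ[of l r] that rm by (auto intro: Ints_0)
      then show ?thesis by (simp add: prod_zero_iff)
    qed
    have bnz: "b r \<noteq> 0" using brZ by (metis Ints_0)
    have b1: "b r ^ 2 - 1 \<noteq> 0"
    proof
      assume "b r ^ 2 - 1 = 0"
      then have "(b r - 1) * (b r + 1) = 0" by (simp add: algebra_simps power2_eq_square)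
      then have "b r - 1 = 0 \<or> b r + 1 = 0" by simp
      then have "b r = 1 \<or> b r = -1" by (auto simp: eq_neg_iff_add_eq_0)
      then show False using brZ by auto
    qed
    have cr: "c r = a 0 * (a 0 - b r) * (\<Prod>i\<in>{1..m}. a i - b r) / (W * (\<Prod>l\<in>{1..m}-{r}. b l - b r))"
    proof -
      have U: "(\<Prod>i\<in>{1..m}. a i - b r) = (a r - b r) * (\<Prod>i\<in>{1..m}-{r}. a i - b r)"
        by (rule prod.remove) (use rm in auto)
      have "c r = a 0 * (a 0 - b r) * (b r - a r) / (b r * ((b r)^2 - 1)) *
                ((\<Prod>l\<in>{1..m} - {r}. a l - b r) / (\<Prod>l\<in>{1..m} - {r}. b l - b r))"
        unfolding c_def by (simp add: prod_dividef)
      also have "\<dots> = a 0 * (a 0 - b r) * ((a r - b r) * (\<Prod>l\<in>{1..m} - {r}. a l - b r)) / (W * (\<Prod>l\<in>{1..m}-{r}. b l - b r))"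
        unfolding W_def by (rule alg3[OF bnz b1 Vnz])
      finally show ?thesis unfolding U .
    qed
    have notZ1: "1 + (b l - b r) \<notin> \<int>" "1 - (b l - b r) \<notin> \<int>" if "l \<in> {1..m}-{r}" for l
      using notint_add[OF bbZ[of l r]] notint_sub[OF bbZ[of l r]] that rm by auto
    have PVnz: "(\<Prod>l\<in>{1..m}-{r}. Pv l) \<noteq> 0"
      using notZ1 by (auto simp: prod_zero_iff Pv_def poch_nz)
    have Pwnz: "Pw \<noteq> 0"
    proof -
      have "2 - b r \<notin> \<int>" "2 + b r \<notin> \<int>" using notint_sub[OF brZ, of 2] notint_add[OF brZ, of 2] by auto
      then show ?thesis unfolding Pw_def by (simp add: poch_nz)
    qed
    have Wnz: "W \<noteq> 0"
    proof -
      have "-b r - 1 \<noteq> 0"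
      proof
        assume h: "-b r - 1 = 0"
        have "b r = -1 - (-b r - 1)" by simp
        also have "\<dots> = -1" using h by simp
        finally show False using brZ by (metis Ints_1 Ints_minus)
      qed
      moreover have "-b r + 1 \<noteq> 0"
      proof
        assume h: "-b r + 1 = 0"
        have "b r = 1 - (-b r + 1)" by simp
        also have "\<dots> = 1" using h by simp
        finally show False using brZ by (metis Ints_1)
      qed
      ultimately have "-b r - 1 \<noteq> 0" "-b r + 1 \<noteq> 0" by auto
      then show ?thesis unfolding W_def using bnz by simp
    qed
    have tnz: "sj^(m-1) \<noteq> 0" using ss by (metis mult_zero_left power_not_zero zero_neq_one)
    have "c r * (B r k * B' r j) = a 0 * (poly Np z / D z)"
      unfolding BB N2 D2
      by (rule alg2[OF QU K2'[of 0] K3' QV cr Pwnz PVnz _ _ Wnz Vnz ss tnz]) simp_all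
    then show ?thesis by (simp add: j_def z_def)
  qed
  have "(\<Prod>l=1..m. b l / a l) * (\<Sum>k=0..n. A k * A' (n-k))
          + (\<Sum>r=1..m. c r * (\<Sum>k<n-1. B r k * B' r (n-2-k)))
       = a 0 * (\<Sum>z\<in>Z. poly Np z / D z)"
    unfolding sumZ sum_distrib_left distrib_left
    by (intro arg_cong2[where f="(+)"] sum.cong refl) (use claim1 claim2 in auto)
  then show ?thesis using lag by simp
qed




lemma coeff_rhs:
  fixes F G :: "complex fps" and H1 H2 :: "nat \<Rightarrow> complex fps"
  shows "fps_nth (fps_const P * F * G + (\<Sum>r\<in>R. fps_X^2 * fps_const (cc r) * H1 r * H2 r)) n
     = P * (\<Sum>i=0..n. fps_nth F i * fps_nth G (n-i))
       + (\<Sum>r\<in>R. cc r * (\<Sum>k<n-1. fps_nth (H1 r) k * fps_nth (H2 r) (n-2-k)))"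
proof -
  have e: "fps_nth (fps_X^2 * fps_const (cc r) * H1 r * H2 r) n
      = cc r * (\<Sum>k<n-1. fps_nth (H1 r) k * fps_nth (H2 r) (n-2-k))" for r
  proof -
    have "fps_X^2 * fps_const (cc r) * H1 r * H2 r = fps_X^2 * (fps_const (cc r) * (H1 r * H2 r))"
      by (simp add: mult.assoc)
    then have "fps_nth (fps_X^2 * fps_const (cc r) * H1 r * H2 r) n
        = (if n < 2 then 0 else cc r * fps_nth (H1 r * H2 r) (n-2))"
      unfolding \<open>fps_X^2 * fps_const (cc r) * H1 r * H2 r = fps_X^2 * (fps_const (cc r) * (H1 r * H2 r))\<close>
        fps_X_power_mult_nth fps_mult_left_const_nth by simp
    also have "\<dots> = cc r * (\<Sum>k<n-1. fps_nth (H1 r) k * fps_nth (H2 r) (n-2-k))"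
    proof (cases "n < 2")
      case True then have "{..<n-1} = {}" by auto
      then show ?thesis using True by simp
    next
      case False
      then have "{..<n-1} = {0..n-2}" by auto
      then show ?thesis using False by (simp add: fps_mult_nth)
    qed
    finally show ?thesis .
  qed
  have e0: "fps_nth (fps_const P * F * G) n = P * (\<Sum>i=0..n. fps_nth F i * fps_nth G (n-i))"
  proof -
    have "fps_const P * F * G = fps_const P * (F * G)" by (simp add: mult.assoc)
    then show ?thesis by (simp only: fps_mult_left_const_nth) (simp only: fps_mult_nth)
  qed
  show ?thesis
    by (simp only: fps_add_nth fps_sum_nth e e0)
qed

theorem corollary5p2:
  fixes m :: nat and a b :: "nat \<Rightarrow> complex"
  assumes "m \<ge> 1"
    and ab: "\<And>i j. i \<le> m \<Longrightarrow> 1 \<le> j \<Longrightarrow> j \<le> m \<Longrightarrow> a i - b j \<notin> \<int>"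
    and a0: "\<And>i. i \<le> m \<Longrightarrow> a i - 0 \<notin> \<int>"
    and b0: "\<And>j. 1 \<le> j \<Longrightarrow> j \<le> m \<Longrightarrow> 0 - b j \<notin> \<int>"
    and bb: "\<And>i j. 1 \<le> i \<Longrightarrow> i < j \<Longrightarrow> j \<le> m \<Longrightarrow> b i - b j \<notin> \<int>"
  shows
    "let as = map a [1..<m+1] @ [a 0];
         bs = map b [1..<m+1];
         P = (\<Prod>l=1..m. b l / a l)
     in fps_const P =
        fps_const P * hyp_fps as bs * hyp_fps (map uminus as) (map uminus bs)
        + (\<Sum>r=1..m. fps_X ^ 2 *
             fps_const (a 0 * (a 0 - b r) * (b r - a r) / (b r * ((b r)^2 - 1)) *
                        (\<Prod>l\<in>{1..m} - {r}. (a l - b r) / (b l - b r))) *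
             hyp_fps (map (\<lambda>c. 1 + (c - b r)) as)
                     (map (\<lambda>l. if l = r then 2 - b r else 1 + (b l - b r)) [1..<m+1]) *
             hyp_fps (map (\<lambda>c. 1 - (c - b r)) as)
                     (map (\<lambda>l. if l = r then 2 + b r else 1 - (b l - b r)) [1..<m+1]))"
proof -
  have hyps: "m \<ge> 1" by fact
  show ?thesis unfolding Let_def
  proof (rule fps_ext)
    fix n
    show "fps_nth (fps_const (\<Prod>l = 1..m. b l / a l)) n = fps_nth (fps_const (\<Prod>l = 1..m. b l / a l) *
          hyp_fps (map a [1..<m + 1] @ [a 0]) (map b [1..<m + 1]) *
          hyp_fps (map uminus (map a [1..<m + 1] @ [a 0])) (map uminus (map b [1..<m + 1])) +
          (\<Sum>r = 1..m.
              fps_X\<^sup>2 *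
              fps_const
               (a 0 * (a 0 - b r) * (b r - a r) / (b r * ((b r)\<^sup>2 - 1)) *
                (\<Prod>l\<in>{1..m} - {r}. (a l - b r) / (b l - b r))) *
              hyp_fps (map (\<lambda>c. 1 + (c - b r)) (map a [1..<m + 1] @ [a 0]))
               (map (\<lambda>l. if l = r then 2 - b r else 1 + (b l - b r)) [1..<m + 1]) *
              hyp_fps (map (\<lambda>c. 1 - (c - b r)) (map a [1..<m + 1] @ [a 0]))
               (map (\<lambda>l. if l = r then 2 + b r else 1 - (b l - b r)) [1..<m + 1]))) n"
      apply (subst coeff_rhs)
      apply (simp only: map_append map_map o_def list.map hyp_nth)
      apply (cases "n = 0")
       apply simp
      using coeff_id[OF hyps _ ab a0 b0 bb, of n] by simp
  qed
qed


end
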